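(* Let $\beta\in(1/2,1)$, $p\asymp d^{1-\beta}$ as $d\to\infty$, and suppose $\limsup_{d\to\infty}\frac{r^2nh(\tau)}{p\log(d/p)}<2-\frac1\beta$. Then for the Bernoulli prior, $\mathbf E_0[L^2_{\pi,r}(Z)]\to1$ as $d\to\infty$.
   Context: Model: for integers $n\ge2$, $d\ge1$ and a fixed baseline mean $\theta\in\mathbb R^d$, we observe independent vectors $X_i=\theta+\Delta\theta\,\mathbf 1\{i>\tau\}+\xi_i$, $i=1,\dots,n$, $\tau\in\{1,\dots,n-1\}$, with $\xi_i$ i.i.d. $\mathcal N(0,I_d)$. $Z=(Z_n^j(s))_{j\le d,s\le n-1}$ where $Z_n^j(s)$ is the $j$-th coordinate of $Z_n(s)=\sqrt{\frac{s(n-s)}n}\bigl(\frac1s\sum_{i=1}^sX_i-\frac1{n-s}\sum_{i=s+1}^nX_i\bigr)$. $h(\tau)=\frac\tau n(1-\frac\tau n)$. Bernoulli prior: draw $m$ uniformly among $p$-element subsets of $\{1,\dots,d\}$ and set $\Delta\theta_j=\frac r{\sqrt p}$ for $j\in m$, $\Delta\theta_j=0$ otherwise. $\mathbf P_{\pi,r}$ is the resulting mixture law of $Z$, $\mathbf P_0$ its law under $\Delta\theta=0$, $L_{\pi,r}=d\mathbf P_{\pi,r}/d\mathbf P_0$. All quantities ($n,p,r,\tau$) are indexed by $d\to\infty$; $a\asymp b$ means $a/b$ is bounded above and below by positive constants. *)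

theory Defs
  imports "HOL-Probability.Probability"
begin

text \<open>Index set of the raw observations: pairs (i,j), i = time 1..n, j = coordinate 1..d.\<close>
definition Xidx :: "nat \<Rightarrow> nat \<Rightarrow> (nat \<times> nat) set" where
  "Xidx n d = {1..n} \<times> {1..d}"

text \<open>Index set of the CUSUM statistic Z: pairs (j,s), j = coordinate 1..d, s = 1..n-1.\<close>
definition Zidx :: "nat \<Rightarrow> nat \<Rightarrow> (nat \<times> nat) set" where
  "Zidx n d = {1..d} \<times> {1..n-1}"

definition X_law :: "nat \<Rightarrow> nat \<Rightarrow> nat \<Rightarrow> (nat \<Rightarrow> real) \<Rightarrow> (nat \<Rightarrow> real)
    \<Rightarrow> ((nat \<times> nat) \<Rightarrow> real) measure" where
  "X_law n d \<tau> \<theta> \<Delta> = PiM (Xidx n d)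
     (\<lambda>(i,j). density lborel (normal_density (\<theta> j + (if i > \<tau> then \<Delta> j else 0)) 1))"

definition Zstat :: "nat \<Rightarrow> nat \<Rightarrow> ((nat \<times> nat) \<Rightarrow> real) \<Rightarrow> ((nat \<times> nat) \<Rightarrow> real)" where
  "Zstat n d X = restrict (\<lambda>(j,s). sqrt (real s * real (n - s) / real n) *
      ((\<Sum>i\<in>{1..s}. X (i,j)) / real s - (\<Sum>i\<in>{s+1..n}. X (i,j)) / real (n - s))) (Zidx n d)"

definition Z_law :: "nat \<Rightarrow> nat \<Rightarrow> nat \<Rightarrow> (nat \<Rightarrow> real) \<Rightarrow> (nat \<Rightarrow> real)
    \<Rightarrow> ((nat \<times> nat) \<Rightarrow> real) measure" where
  "Z_law n d \<tau> \<theta> \<Delta> = distr (X_law n d \<tau> \<theta> \<Delta>) (PiM (Zidx n d) (\<lambda>_. lborel)) (Zstat n d)"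

definition bern_shift :: "nat \<Rightarrow> real \<Rightarrow> nat set \<Rightarrow> nat \<Rightarrow> real" where
  "bern_shift p r m j = (if j \<in> m then r / sqrt (real p) else 0)"

definition bern_prior_law :: "nat \<Rightarrow> nat \<Rightarrow> nat \<Rightarrow> (nat \<Rightarrow> real) \<Rightarrow> nat \<Rightarrow> real
    \<Rightarrow> ((nat \<times> nat) \<Rightarrow> real) measure" where
  "bern_prior_law n d \<tau> \<theta> p r =
     measure_pmf (pmf_of_set {m. m \<subseteq> {1..d} \<and> card m = p}) \<bind>
       (\<lambda>m. Z_law n d \<tau> \<theta> (bern_shift p r m))"

definition null_law :: "nat \<Rightarrow> nat \<Rightarrow> nat \<Rightarrow> (nat \<Rightarrow> real) \<Rightarrow> ((nat \<times> nat) \<Rightarrow> real) measure" where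
  "null_law n d \<tau> \<theta> = Z_law n d \<tau> \<theta> (\<lambda>_. 0)"

definition LR :: "nat \<Rightarrow> nat \<Rightarrow> nat \<Rightarrow> (nat \<Rightarrow> real) \<Rightarrow> nat \<Rightarrow> real
    \<Rightarrow> ((nat \<times> nat) \<Rightarrow> real) \<Rightarrow> ennreal" where
  "LR n d \<tau> \<theta> p r = RN_deriv (null_law n d \<tau> \<theta>) (bern_prior_law n d \<tau> \<theta> p r)"

definition second_moment :: "nat \<Rightarrow> nat \<Rightarrow> nat \<Rightarrow> (nat \<Rightarrow> real) \<Rightarrow> nat \<Rightarrow> real \<Rightarrow> ennreal" where
  "second_moment n d \<tau> \<theta> p r = (\<integral>\<^sup>+ z. (LR n d \<tau> \<theta> p r z)\<^sup>2 \<partial>null_law n d \<tau> \<theta>)"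

definition hfun :: "nat \<Rightarrow> nat \<Rightarrow> real" where
  "hfun n \<tau> = (real \<tau> / real n) * (1 - real \<tau> / real n)"

end

theory Submission
  imports Defs
begin

lemma PiM_density_prod:
  fixes M :: "'i \<Rightarrow> 'a measure"
  assumes fin: "finite I" and M: "\<And>i. prob_space (M i)"
    and N: "\<And>i. prob_space (density (M i) (f i))"
    and f[measurable]: "\<And>i. f i \<in> borel_measurable (M i)"
  shows "PiM I (\<lambda>i. density (M i) (f i)) = density (PiM I M) (\<lambda>x. \<Prod>i\<in>I. f i (x i))"
proof -
  interpret NN: product_prob_space "\<lambda>i. density (M i) (f i)"
    by (rule product_prob_spaceI[OF N])
  interpret MM: product_prob_space M
    by (rule product_prob_spaceI[OF M])
  have "density (PiM I M) (\<lambda>x. \<Prod>i\<in>I. f i (x i)) = PiM I (\<lambda>i. density (M i) (f i))"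
  proof (rule NN.PiM_eqI[OF fin])
    show "sets (density (PiM I M) (\<lambda>x. \<Prod>i\<in>I. f i (x i))) = sets (PiM I (\<lambda>i. density (M i) (f i)))"
      unfolding sets_density by (rule sets_PiM_cong) simp_all
  next
    fix A assume A: "\<And>i. i \<in> I \<Longrightarrow> A i \<in> sets (density (M i) (f i))"
    then have A': "\<And>i. i \<in> I \<Longrightarrow> A i \<in> sets (M i)" by simp
    have PA: "Pi\<^sub>E I A \<in> sets (PiM I M)"
      using A' by (intro sets_PiM_I_finite fin) auto
    have "emeasure (density (PiM I M) (\<lambda>x. \<Prod>i\<in>I. f i (x i))) (Pi\<^sub>E I A)
       = (\<integral>\<^sup>+ x. (\<Prod>i\<in>I. f i (x i)) * indicator (Pi\<^sub>E I A) x \<partial>PiM I M)"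
      by (rule emeasure_density[OF _ PA]) (intro borel_measurable_prod_ennreal; measurable)
    also have "\<dots> = (\<integral>\<^sup>+ x. (\<Prod>i\<in>I. f i (x i) * indicator (A i) (x i)) \<partial>PiM I M)"
    proof (rule nn_integral_cong)
      fix x assume x: "x \<in> space (PiM I M)"
      then have ext: "x \<in> extensional I" by (simp add: space_PiM PiE_def)
      have "indicator (Pi\<^sub>E I A) x = (\<Prod>i\<in>I. indicator (A i) (x i) :: ennreal)"
      proof (cases "\<forall>i\<in>I. x i \<in> A i")
        case True then show ?thesis using ext by (simp add: indicator_def PiE_iff)
      next
        case False then obtain i where "i \<in> I" "x i \<notin> A i" by blast
        then show ?thesis using fin by (auto simp: indicator_def PiE_iff intro!: prod_zero)
      qed
      then show "(\<Prod>i\<in>I. f i (x i)) * indicator (Pi\<^sub>E I A) x = (\<Prod>i\<in>I. f i (x i) * indicator (A i) (x i))"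
        by (simp add: prod.distrib)
    qed
    also have "\<dots> = (\<Prod>i\<in>I. \<integral>\<^sup>+ y. f i y * indicator (A i) y \<partial>M i)"
      using A' by (intro MM.product_nn_integral_prod fin) auto
    also have "\<dots> = (\<Prod>i\<in>I. emeasure (density (M i) (f i)) (A i))"
      using A' by (intro prod.cong refl) (simp add: emeasure_density)
    finally show "emeasure (density (PiM I M) (\<lambda>x. \<Prod>i\<in>I. f i (x i))) (Pi\<^sub>E I A) = (\<Prod>i\<in>I. emeasure (density (M i) (f i)) (A i))" .
  qed
  then show ?thesis by simp
qed

lemma normal_density_shift_eq:
  "normal_density (\<mu> + \<delta>) 1 x = normal_density \<mu> 1 x * exp (\<delta> * (x - \<mu>) - \<delta>\<^sup>2 / 2)"
proof -
  have "- ((x - (\<mu> + \<delta>))\<^sup>2 / 2) = - ((x - \<mu>)\<^sup>2 / 2) + (\<delta> * (x - \<mu>) - \<delta>\<^sup>2 / 2)"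
    by (simp add: power2_eq_square field_simps)
  then show ?thesis
    unfolding normal_density_def by (simp add: exp_add[symmetric])
qed

lemma density_normal_shift:
  "density lborel (normal_density (\<mu> + \<delta>) 1) =
   density (density lborel (normal_density \<mu> 1)) (\<lambda>x. ennreal (exp (\<delta> * (x - \<mu>) - \<delta>\<^sup>2 / 2)))"
  by (subst density_density_eq) (auto simp: normal_density_shift_eq ennreal_mult'')

lemma distr_normal_plus:
  "distr (density lborel (normal_density \<mu> 1)) lborel (\<lambda>x. x + \<delta>) = density lborel (normal_density (\<mu> + \<delta>) 1)"
proof -
  have "density lborel (normal_density (\<mu> + \<delta>) 1)
      = density (distr lborel borel ((+) \<delta>)) (normal_density (\<mu> + \<delta>) 1)"
    by (simp add: lborel_distr_plus)
  also have "\<dots> = distr (density lborel (\<lambda>x. ennreal (normal_density (\<mu> + \<delta>) 1 (\<delta> + x)))) borel ((+) \<delta>)"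
    by (rule density_distr) auto
  also have "(\<lambda>x. ennreal (normal_density (\<mu> + \<delta>) 1 (\<delta> + x))) = (\<lambda>x. ennreal (normal_density \<mu> 1 x))"
    by (simp add: normal_density_def algebra_simps)
  also have "distr (density lborel (\<lambda>x. ennreal (normal_density \<mu> 1 x))) borel ((+) \<delta>)
     = distr (density lborel (normal_density \<mu> 1)) lborel (\<lambda>x. x + \<delta>)"
    by (rule distr_cong) (auto simp: add.commute)
  finally show ?thesis ..
qed

lemma distr_PiM_compwise:
  fixes M N :: "'i \<Rightarrow> 'a measure"
  assumes fin: "finite I" and M: "\<And>i. prob_space (M i)" and N: "\<And>i. prob_space (N i)"
    and g[measurable]: "\<And>i. i \<in> I \<Longrightarrow> g i \<in> measurable (M i) (N i)"
    and eq: "\<And>i. i \<in> I \<Longrightarrow> distr (M i) (N i) (g i) = N i"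
  shows "distr (PiM I M) (PiM I N) (\<lambda>x. \<lambda>i\<in>I. g i (x i)) = PiM I N"
proof -
  interpret NN: product_prob_space N by (rule product_prob_spaceI[OF N])
  interpret MM: product_prob_space M by (rule product_prob_spaceI[OF M])
  have meas: "(\<lambda>x. \<lambda>i\<in>I. g i (x i)) \<in> measurable (PiM I M) (PiM I N)"
    by measurable
  show ?thesis
  proof (rule NN.PiM_eqI[OF fin])
    show "sets (distr (PiM I M) (PiM I N) (\<lambda>x. \<lambda>i\<in>I. g i (x i))) = sets (PiM I N)" by simp
  next
    fix A assume A: "\<And>i. i \<in> I \<Longrightarrow> A i \<in> sets (N i)"
    have PA: "Pi\<^sub>E I A \<in> sets (PiM I N)"
      using A by (intro sets_PiM_I_finite fin) auto
    have pre: "(\<lambda>x. \<lambda>i\<in>I. g i (x i)) -` Pi\<^sub>E I A \<inter> space (PiM I M)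
        = Pi\<^sub>E I (\<lambda>i. g i -` A i \<inter> space (M i))"
      by (auto simp: space_PiM PiE_iff)
    have "emeasure (distr (PiM I M) (PiM I N) (\<lambda>x. \<lambda>i\<in>I. g i (x i))) (Pi\<^sub>E I A)
        = emeasure (PiM I M) (Pi\<^sub>E I (\<lambda>i. g i -` A i \<inter> space (M i)))"
      using PA meas by (simp add: emeasure_distr pre)
    also have "\<dots> = (\<Prod>i\<in>I. emeasure (M i) (g i -` A i \<inter> space (M i)))"
      using A g by (intro MM.emeasure_PiM fin) (auto intro: measurable_sets)
    also have "\<dots> = (\<Prod>i\<in>I. emeasure (N i) (A i))"
    proof (rule prod.cong[OF refl])
      fix i assume i: "i \<in> I"
      have "emeasure (N i) (A i) = emeasure (distr (M i) (N i) (g i)) (A i)" using eq[OF i] by simp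
      also have "\<dots> = emeasure (M i) (g i -` A i \<inter> space (M i))"
        using A[OF i] g[OF i] by (simp add: emeasure_distr)
      finally show "emeasure (M i) (g i -` A i \<inter> space (M i)) = emeasure (N i) (A i)" ..
    qed
    finally show "emeasure (distr (PiM I M) (PiM I N) (\<lambda>x. \<lambda>i\<in>I. g i (x i))) (Pi\<^sub>E I A) = (\<Prod>i\<in>I. emeasure (N i) (A i))" .
  qed
qed


definition qq :: "nat \<Rightarrow> nat \<Rightarrow> real" where "qq n \<tau> = real \<tau> * real (n - \<tau>) / real n"
definition cc :: "nat \<Rightarrow> nat \<Rightarrow> nat \<Rightarrow> real" where
  "cc n \<tau> i = (if \<tau> < i then 1 else 0) - real (n - \<tau>) / real n"
definition Phi :: "nat \<Rightarrow> nat \<Rightarrow> nat \<Rightarrow> (nat \<Rightarrow> real) \<Rightarrow> ((nat \<times> nat) \<Rightarrow> real) \<Rightarrow> real" where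
  "Phi n d \<tau> a z = exp ((\<Sum>j\<in>{1..d}. a j * (- sqrt (qq n \<tau>)) * z (j,\<tau>)) - qq n \<tau> * (\<Sum>j\<in>{1..d}. (a j)\<^sup>2) / 2)"

lemma sum_split_tau:
  fixes f :: "nat \<Rightarrow> 'b::comm_monoid_add"
  assumes "\<tau> \<le> n"
  shows "(\<Sum>i\<in>{1..n}. f i) = (\<Sum>i\<in>{1..\<tau>}. f i) + (\<Sum>i\<in>{\<tau>+1..n}. f i)"
proof -
  have "{1..n} = {1..\<tau>} \<union> {\<tau>+1..n}" using assms by auto
  then show ?thesis by (simp add: sum.union_disjoint ivl_disj_int)
qed

lemma qq_nonneg: "0 \<le> qq n \<tau>" by (simp add: qq_def)

lemma cc_sums:
  assumes "1 \<le> \<tau>" "\<tau> < n"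
  shows "(\<Sum>i\<in>{1..n}. cc n \<tau> i) = 0"
    and "(\<Sum>i\<in>{1..n}. (cc n \<tau> i)\<^sup>2) = qq n \<tau>"
    and "(\<Sum>i\<in>{1..n}. cc n \<tau> i * y i) = - sqrt (qq n \<tau>) * (sqrt (qq n \<tau>) *
          ((\<Sum>i\<in>{1..\<tau>}. y i) / real \<tau> - (\<Sum>i\<in>{\<tau>+1..n}. y i) / real (n - \<tau>)))"
proof -
  have le: "\<tau> \<le> n" using assms by simp
  have c1: "\<And>i. i \<in> {1..\<tau>} \<Longrightarrow> cc n \<tau> i = - (real (n - \<tau>) / real n)" by (auto simp: cc_def)
  have c2: "\<And>i. i \<in> {\<tau>+1..n} \<Longrightarrow> cc n \<tau> i = real \<tau> / real n"
    using assms by (auto simp: cc_def field_simps of_nat_diff)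
  have n0: "real n > 0" using assms by simp
  have nt: "real (n - \<tau>) > 0" using assms by simp
  have t0: "real \<tau> > 0" using assms by simp
  have gen: "\<And>h. (\<Sum>i\<in>{1..n}. h (cc n \<tau> i) i) = (\<Sum>i\<in>{1..\<tau>}. h (- (real (n - \<tau>) / real n)) i) + (\<Sum>i\<in>{\<tau>+1..n}. h (real \<tau> / real n) i)"
    by (subst sum_split_tau[OF le], rule arg_cong2[where f="(+)"]; rule sum.cong[OF refl]; simp only: c1 c2)
  have card2: "real (card {\<tau>+1..n}) = real n - real \<tau>" using le by (simp add: of_nat_diff)
  have card1: "real (card {1..\<tau>}) = real \<tau>" by simp
  show "(\<Sum>i\<in>{1..n}. cc n \<tau> i) = 0"
    using gen[of "\<lambda>c i. c"] n0 card1 card2 by (simp add: of_nat_diff le field_simps)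
  show "(\<Sum>i\<in>{1..n}. (cc n \<tau> i)\<^sup>2) = qq n \<tau>"
  proof -
    have "(\<Sum>i\<in>{1..n}. (cc n \<tau> i)\<^sup>2) = real \<tau> * (real (n - \<tau>) / real n)\<^sup>2 + (real n - real \<tau>) * (real \<tau> / real n)\<^sup>2"
      using gen[of "\<lambda>c i. c\<^sup>2"] card1 card2 by simp
    also have "\<dots> = qq n \<tau>" using n0 by (simp add: qq_def of_nat_diff le field_simps power2_eq_square)
    finally show ?thesis .
  qed
  have sq: "sqrt (qq n \<tau>) * sqrt (qq n \<tau>) = qq n \<tau>" using qq_nonneg by simp
  show "(\<Sum>i\<in>{1..n}. cc n \<tau> i * y i) = - sqrt (qq n \<tau>) * (sqrt (qq n \<tau>) *
          ((\<Sum>i\<in>{1..\<tau>}. y i) / real \<tau> - (\<Sum>i\<in>{\<tau>+1..n}. y i) / real (n - \<tau>)))"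
  proof -
    have "(\<Sum>i\<in>{1..n}. cc n \<tau> i * y i) = - (real (n - \<tau>) / real n) * (\<Sum>i\<in>{1..\<tau>}. y i) + (real \<tau> / real n) * (\<Sum>i\<in>{\<tau>+1..n}. y i)"
      using gen[of "\<lambda>c i. c * y i"] by (simp only: sum_distrib_left)
    also have "\<dots> = - qq n \<tau> * ((\<Sum>i\<in>{1..\<tau>}. y i) / real \<tau> - (\<Sum>i\<in>{\<tau>+1..n}. y i) / real (n - \<tau>))"
      using n0 nt t0 by (simp add: qq_def field_simps)
    finally show ?thesis unfolding mult.assoc[symmetric] mult_minus_left sq .
  qed
qed


lemma Zstat_measurable_key:
  assumes js: "(j, s) \<in> Zidx n d"
  shows "(\<lambda>x. sqrt (real s * real (n - s) / real n) *
          ((\<Sum>i\<in>{1..s}. x (i, j)) / real s - (\<Sum>i\<in>{s+1..n}. x (i, j)) / real (n - s)))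
        \<in> borel_measurable (PiM (Xidx n d) (\<lambda>_. lborel))"
proof -
  have j: "j \<in> {1..d}" and s: "s \<in> {1..n-1}" using js by (auto simp: Zidx_def)
  have m1: "(\<lambda>x. \<Sum>i\<in>{1..s}. x (i, j)) \<in> borel_measurable (PiM (Xidx n d) (\<lambda>_. lborel))"
    using j s by (intro borel_measurable_sum measurable_component_singleton) (auto simp: Xidx_def)
  have m2: "(\<lambda>x. \<Sum>i\<in>{s+1..n}. x (i, j)) \<in> borel_measurable (PiM (Xidx n d) (\<lambda>_. lborel))"
    using j s by (intro borel_measurable_sum measurable_component_singleton) (auto simp: Xidx_def)
  show ?thesis
    by (intro borel_measurable_times borel_measurable_diff borel_measurable_divide m1 m2 borel_measurable_const)
qed

lemma Zstat_measurable[measurable]: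
  "Zstat n d \<in> measurable (PiM (Xidx n d) (\<lambda>_. lborel)) (PiM (Zidx n d) (\<lambda>_. lborel))"
  unfolding Zstat_def
  apply (rule measurable_restrict)
  subgoal for i using Zstat_measurable_key[of "fst i" "snd i" n d] by (simp add: split_beta)
  done

lemma sets_X_law: "sets (X_law n d \<tau> \<theta> \<Delta>) = sets (PiM (Xidx n d) (\<lambda>_. lborel))"
  unfolding X_law_def by (rule sets_PiM_cong) auto

lemma space_X_law: "space (X_law n d \<tau> \<theta> \<Delta>) = space (PiM (Xidx n d) (\<lambda>_. lborel))"
  using sets_X_law by (rule sets_eq_imp_space_eq)

lemma prob_space_X_law: "prob_space (X_law n d \<tau> \<theta> \<Delta>)"
  unfolding X_law_def by (rule prob_space_PiM) (auto intro: prob_space_normal_density)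

lemma Zstat_measurable_X[measurable]:
  "Zstat n d \<in> measurable (X_law n d \<tau> \<theta> \<Delta>) (PiM (Zidx n d) (\<lambda>_. lborel))"
  using Zstat_measurable by (simp add: measurable_cong_sets[OF sets_X_law refl])

lemma prob_space_Z_law: "prob_space (Z_law n d \<tau> \<theta> \<Delta>)"
  unfolding Z_law_def
  by (intro prob_space.prob_space_distr prob_space_X_law Zstat_measurable_X)

lemma sets_Z_law: "sets (Z_law n d \<tau> \<theta> \<Delta>) = sets (PiM (Zidx n d) (\<lambda>_. lborel))"
  unfolding Z_law_def by simp

lemma exponent_identity:
  assumes "1 \<le> \<tau>" "\<tau> < n"
  shows "(\<Sum>ij\<in>Xidx n d. \<Delta> (snd ij) * cc n \<tau> (fst ij) * (x ij - \<theta>s (snd ij)) - (\<Delta> (snd ij) * cc n \<tau> (fst ij))\<^sup>2 / 2)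
       = (\<Sum>j\<in>{1..d}. \<Delta> j * (- sqrt (qq n \<tau>)) * Zstat n d x (j,\<tau>)) - qq n \<tau> * (\<Sum>j\<in>{1..d}. (\<Delta> j)\<^sup>2) / 2"
proof -
  have "(\<Sum>ij\<in>Xidx n d. \<Delta> (snd ij) * cc n \<tau> (fst ij) * (x ij - \<theta>s (snd ij)) - (\<Delta> (snd ij) * cc n \<tau> (fst ij))\<^sup>2 / 2)
      = (\<Sum>i\<in>{1..n}. \<Sum>j\<in>{1..d}. \<Delta> j * cc n \<tau> i * (x (i,j) - \<theta>s j) - (\<Delta> j * cc n \<tau> i)\<^sup>2 / 2)"
    unfolding Xidx_def by (simp add: sum.cartesian_product split_beta)
  also have "\<dots> = (\<Sum>j\<in>{1..d}. \<Sum>i\<in>{1..n}. \<Delta> j * cc n \<tau> i * (x (i,j) - \<theta>s j) - (\<Delta> j * cc n \<tau> i)\<^sup>2 / 2)"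
    by (rule sum.swap)
  also have "\<dots> = (\<Sum>j\<in>{1..d}. \<Delta> j * (\<Sum>i\<in>{1..n}. cc n \<tau> i * x (i,j)) - \<Delta> j * \<theta>s j * (\<Sum>i\<in>{1..n}. cc n \<tau> i)
        - (\<Delta> j)\<^sup>2 / 2 * (\<Sum>i\<in>{1..n}. (cc n \<tau> i)\<^sup>2))"
    by (intro sum.cong refl) (simp add: sum_subtractf sum_distrib_left algebra_simps power_mult_distrib sum_divide_distrib sum.distrib)
  also have "\<dots> = (\<Sum>j\<in>{1..d}. \<Delta> j * (- sqrt (qq n \<tau>)) * Zstat n d x (j,\<tau>) - qq n \<tau> * (\<Delta> j)\<^sup>2 / 2)"
  proof (intro sum.cong refl)
    fix j assume j: "j \<in> {1..d}"
    have "(j, \<tau>) \<in> Zidx n d" using j assms by (auto simp: Zidx_def)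
    then have Z: "Zstat n d x (j,\<tau>) = sqrt (qq n \<tau>) *
          ((\<Sum>i\<in>{1..\<tau>}. x (i, j)) / real \<tau> - (\<Sum>i\<in>{\<tau>+1..n}. x (i, j)) / real (n - \<tau>))"
      by (simp add: Zstat_def qq_def)
    show "\<Delta> j * (\<Sum>i\<in>{1..n}. cc n \<tau> i * x (i,j)) - \<Delta> j * \<theta>s j * (\<Sum>i\<in>{1..n}. cc n \<tau> i)
        - (\<Delta> j)\<^sup>2 / 2 * (\<Sum>i\<in>{1..n}. (cc n \<tau> i)\<^sup>2) = \<Delta> j * (- sqrt (qq n \<tau>)) * Zstat n d x (j,\<tau>) - qq n \<tau> * (\<Delta> j)\<^sup>2 / 2"
      unfolding cc_sums[OF assms] Z by simp
  qed
  also have "\<dots> = (\<Sum>j\<in>{1..d}. \<Delta> j * (- sqrt (qq n \<tau>)) * Zstat n d x (j,\<tau>)) - qq n \<tau> * (\<Sum>j\<in>{1..d}. (\<Delta> j)\<^sup>2) / 2"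
    by (simp add: sum_subtractf sum_distrib_left sum_divide_distrib)
  finally show ?thesis .
qed


lemma Phi_measurable[measurable]:
  assumes "1 \<le> \<tau>" "\<tau> < n"
  shows "(\<lambda>z. Phi n d \<tau> a z) \<in> borel_measurable (PiM (Zidx n d) (\<lambda>_. lborel))"
proof -
  have "(\<lambda>z. \<Sum>j\<in>{1..d}. a j * (- sqrt (qq n \<tau>)) * z (j,\<tau>)) \<in> borel_measurable (PiM (Zidx n d) (\<lambda>_. lborel))"
    using assms by (intro borel_measurable_sum borel_measurable_times borel_measurable_const measurable_component_singleton)
      (auto simp: Zidx_def)
  then show ?thesis unfolding Phi_def by measurable
qed

lemma Zstat_shift:
  assumes "\<And>i j. (i,j) \<in> Xidx n d \<Longrightarrow> y (i,j) = x (i,j) + c j"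
  shows "Zstat n d y = Zstat n d x"
  unfolding Zstat_def
proof (rule restrict_ext)
  fix js assume js: "js \<in> Zidx n d"
  obtain j s where js': "js = (j,s)" by (cases js)
  have j: "j \<in> {1..d}" and s: "1 \<le> s" "s < n" using js js' by (auto simp: Zidx_def)
  have e1: "(\<Sum>i\<in>{1..s}. y (i, j)) = (\<Sum>i\<in>{1..s}. x (i, j)) + real s * c j"
    using j s by (simp add: assms Xidx_def sum.distrib)
  have e2: "(\<Sum>i\<in>{s+1..n}. y (i, j)) = (\<Sum>i\<in>{s+1..n}. x (i, j)) + real (n - s) * c j"
    using j s by (simp add: assms Xidx_def sum.distrib)
  have "real s > 0" "real (n - s) > 0" using s by auto
  then show "(case js of (j, s) \<Rightarrow> sqrt (real s * real (n - s) / real n) *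
          ((\<Sum>i\<in>{1..s}. y (i, j)) / real s - (\<Sum>i\<in>{s+1..n}. y (i, j)) / real (n - s))) =
        (case js of (j, s) \<Rightarrow> sqrt (real s * real (n - s) / real n) *
          ((\<Sum>i\<in>{1..s}. x (i, j)) / real s - (\<Sum>i\<in>{s+1..n}. x (i, j)) / real (n - s)))"
    unfolding js' prod.case e1 e2 by (simp add: field_simps)
qed


lemma Z_law_density:
  assumes tau: "1 \<le> \<tau>" "\<tau> < n"
  shows "Z_law n d \<tau> \<theta> \<Delta> = density (null_law n d \<tau> \<theta>) (\<lambda>z. ennreal (Phi n d \<tau> \<Delta> z))"
proof -
  define \<theta>s where "\<theta>s j = \<theta> j + \<Delta> j * real (n - \<tau>) / real n" for j
  define fe where "fe ij x = ennreal (exp (\<Delta> (snd ij) * cc n \<tau> (fst ij) * (x - \<theta>s (snd ij))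
      - (\<Delta> (snd ij) * cc n \<tau> (fst ij))\<^sup>2 / 2))" for ij :: "nat \<times> nat" and x
  define M0 where "M0 \<theta>' = (\<lambda>(i::nat,j). density lborel (normal_density (\<theta>' j) 1))" for \<theta>' :: "nat \<Rightarrow> real"
  define MX where "MX = (\<lambda>(i,j). density lborel (normal_density (\<theta> j + (if \<tau> < i then \<Delta> j else 0)) 1))"
  have n0: "real n > 0" using tau by simp
  have X0: "X_law n d \<tau> \<theta>' (\<lambda>_. 0) = PiM (Xidx n d) (M0 \<theta>')" for \<theta>'
    unfolding X_law_def M0_def by simp
  have XD: "X_law n d \<tau> \<theta> \<Delta> = PiM (Xidx n d) MX"
    unfolding X_law_def MX_def by simp
  have pt: "density (M0 \<theta>s ij) (fe ij) = MX ij" for ij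
  proof -
    obtain i j where ij: "ij = (i,j)" by (cases ij)
    have e: "\<theta> j + (if \<tau> < i then \<Delta> j else 0) = \<theta>s j + \<Delta> j * cc n \<tau> i"
      using n0 by (simp add: \<theta>s_def cc_def field_simps)
    have "MX ij = density lborel (normal_density (\<theta>s j + \<Delta> j * cc n \<tau> i) 1)"
      unfolding ij MX_def prod.case e ..
    also have "\<dots> = density (M0 \<theta>s ij) (fe ij)"
      unfolding density_normal_shift ij M0_def fe_def by simp
    finally show ?thesis ..
  qed
  have M0p: "prob_space (M0 \<theta>' ij)" for \<theta>' ij
    unfolding M0_def by (cases ij) (simp add: prob_space_normal_density)
  have MXp: "prob_space (MX ij)" for ij
    unfolding MX_def by (cases ij) (simp add: prob_space_normal_density)
  have fem: "fe ij \<in> borel_measurable (M0 \<theta>s ij)" for ij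
  proof -
    have "fe ij \<in> borel_measurable borel" unfolding fe_def by measurable
    moreover have "sets (M0 \<theta>s ij) = sets borel" unfolding M0_def by (cases ij) simp
    then have "measurable (M0 \<theta>s ij) (borel :: ennreal measure) = measurable borel borel"
      by (rule measurable_cong_sets) simp
    ultimately show ?thesis by simp
  qed
  have step1: "X_law n d \<tau> \<theta> \<Delta> = density (X_law n d \<tau> \<theta>s (\<lambda>_. 0)) (\<lambda>x. \<Prod>ij\<in>Xidx n d. fe ij (x ij))"
    unfolding XD X0 pt[symmetric]
    by (rule PiM_density_prod) (auto simp: Xidx_def M0p pt MXp fem)
  have step2: "(\<lambda>x. \<Prod>ij\<in>Xidx n d. fe ij (x ij)) = (\<lambda>x. ennreal (Phi n d \<tau> \<Delta> (Zstat n d x)))"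
  proof
    fix x
    have "(\<Prod>ij\<in>Xidx n d. fe ij (x ij)) = ennreal (\<Prod>ij\<in>Xidx n d. exp (\<Delta> (snd ij) * cc n \<tau> (fst ij) * (x ij - \<theta>s (snd ij))
      - (\<Delta> (snd ij) * cc n \<tau> (fst ij))\<^sup>2 / 2))"
      unfolding fe_def by (rule prod_ennreal) simp
    also have "\<dots> = ennreal (exp (\<Sum>ij\<in>Xidx n d. \<Delta> (snd ij) * cc n \<tau> (fst ij) * (x ij - \<theta>s (snd ij))
      - (\<Delta> (snd ij) * cc n \<tau> (fst ij))\<^sup>2 / 2))"
      by (simp add: exp_sum Xidx_def)
    also have "\<dots> = ennreal (Phi n d \<tau> \<Delta> (Zstat n d x))"
      unfolding exponent_identity[OF tau] Phi_def ..
    finally show "(\<Prod>ij\<in>Xidx n d. fe ij (x ij)) = ennreal (Phi n d \<tau> \<Delta> (Zstat n d x))" .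
  qed
  have Phim: "(\<lambda>z. ennreal (Phi n d \<tau> \<Delta> z)) \<in> borel_measurable (PiM (Zidx n d) (\<lambda>_. lborel))"
    using Phi_measurable[OF tau] by measurable
  have step3: "Z_law n d \<tau> \<theta> \<Delta> = density (Z_law n d \<tau> \<theta>s (\<lambda>_. 0)) (\<lambda>z. ennreal (Phi n d \<tau> \<Delta> z))"
    unfolding Z_law_def step1 step2
    by (rule density_distr[symmetric, OF Phim]) (rule Zstat_measurable_X)
  define sh where "sh x = (\<lambda>ij\<in>Xidx n d. x ij + \<Delta> (snd ij) * real (n - \<tau>) / real n)" for x :: "nat \<times> nat \<Rightarrow> real"
  have shd: "distr (X_law n d \<tau> \<theta> (\<lambda>_. 0)) (X_law n d \<tau> \<theta>s (\<lambda>_. 0)) sh = X_law n d \<tau> \<theta>s (\<lambda>_. 0)"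
    unfolding X0 sh_def
  proof (rule distr_PiM_compwise)
    show "finite (Xidx n d)" by (simp add: Xidx_def)
    show "prob_space (M0 \<theta> i)" "prob_space (M0 \<theta>s i)" for i by (rule M0p)+
    fix ij assume "ij \<in> Xidx n d"
    obtain i j where ij: "ij = (i,j)" by (cases ij)
    show "(\<lambda>y. y + \<Delta> (snd ij) * real (n - \<tau>) / real n) \<in> M0 \<theta> ij \<rightarrow>\<^sub>M M0 \<theta>s ij"
      unfolding ij M0_def by (subst measurable_cong_sets[of _ borel _ borel]) simp_all
    show "distr (M0 \<theta> ij) (M0 \<theta>s ij) (\<lambda>y. y + \<Delta> (snd ij) * real (n - \<tau>) / real n) = M0 \<theta>s ij"
    proof -
      have "distr (M0 \<theta> ij) (M0 \<theta>s ij) (\<lambda>y. y + \<Delta> (snd ij) * real (n - \<tau>) / real n)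
          = distr (density lborel (normal_density (\<theta> j) 1)) lborel (\<lambda>y. y + \<Delta> j * real (n - \<tau>) / real n)"
        unfolding ij M0_def by (rule distr_cong) auto
      also have "\<dots> = M0 \<theta>s ij"
        unfolding distr_normal_plus ij M0_def by (simp add: \<theta>s_def)
      finally show ?thesis .
    qed
  qed
  have shm: "sh \<in> measurable (X_law n d \<tau> \<theta> (\<lambda>_. 0)) (X_law n d \<tau> \<theta>s (\<lambda>_. 0))"
    unfolding measurable_cong_sets[OF sets_X_law sets_X_law] sh_def by measurable
  have step4: "Z_law n d \<tau> \<theta>s (\<lambda>_. 0) = null_law n d \<tau> \<theta>"
  proof -
    have "Z_law n d \<tau> \<theta>s (\<lambda>_. 0) = distr (distr (X_law n d \<tau> \<theta> (\<lambda>_. 0)) (X_law n d \<tau> \<theta>s (\<lambda>_. 0)) sh)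
          (PiM (Zidx n d) (\<lambda>_. lborel)) (Zstat n d)"
      unfolding Z_law_def shd ..
    also have "\<dots> = distr (X_law n d \<tau> \<theta> (\<lambda>_. 0)) (PiM (Zidx n d) (\<lambda>_. lborel)) (Zstat n d \<circ> sh)"
      by (rule distr_distr[OF Zstat_measurable_X shm])
    also have "\<dots> = distr (X_law n d \<tau> \<theta> (\<lambda>_. 0)) (PiM (Zidx n d) (\<lambda>_. lborel)) (Zstat n d)"
    proof (rule distr_cong[OF refl refl])
      fix x show "(Zstat n d \<circ> sh) x = Zstat n d x"
        unfolding o_def by (rule Zstat_shift[where c="\<lambda>j. \<Delta> j * real (n - \<tau>) / real n"]) (simp add: sh_def)
    qed
    finally show ?thesis unfolding null_law_def Z_law_def .
  qed
  show ?thesis using step3 step4 by simp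
qed


lemma Phi_nonneg: "0 \<le> Phi n d \<tau> a z" by (simp add: Phi_def)

lemma Phi_mult:
  "Phi n d \<tau> a z * Phi n d \<tau> b z = Phi n d \<tau> (\<lambda>j. a j + b j) z * exp (qq n \<tau> * (\<Sum>j\<in>{1..d}. a j * b j))"
proof -
  have "(\<Sum>j\<in>{1..d}. a j * (- sqrt (qq n \<tau>)) * z (j,\<tau>)) - qq n \<tau> * (\<Sum>j\<in>{1..d}. (a j)\<^sup>2) / 2
      + ((\<Sum>j\<in>{1..d}. b j * (- sqrt (qq n \<tau>)) * z (j,\<tau>)) - qq n \<tau> * (\<Sum>j\<in>{1..d}. (b j)\<^sup>2) / 2)
      = (\<Sum>j\<in>{1..d}. (a j + b j) * (- sqrt (qq n \<tau>)) * z (j,\<tau>)) - qq n \<tau> * (\<Sum>j\<in>{1..d}. (a j + b j)\<^sup>2) / 2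
        + qq n \<tau> * (\<Sum>j\<in>{1..d}. a j * b j)"
  proof -
    have h1: "(\<Sum>j\<in>{1..d}. (a j + b j) * (- sqrt (qq n \<tau>)) * z (j,\<tau>)) = (\<Sum>j\<in>{1..d}. a j * (- sqrt (qq n \<tau>)) * z (j,\<tau>)) + (\<Sum>j\<in>{1..d}. b j * (- sqrt (qq n \<tau>)) * z (j,\<tau>))"
      by (simp only: sum.distrib[symmetric]) (simp add: algebra_simps)
    have h2: "(\<Sum>j\<in>{1..d}. (a j + b j)\<^sup>2) = (\<Sum>j\<in>{1..d}. (a j)\<^sup>2) + (\<Sum>j\<in>{1..d}. (b j)\<^sup>2) + 2 * (\<Sum>j\<in>{1..d}. a j * b j)"
      by (simp add: power2_sum sum.distrib sum_distrib_left mult.assoc)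
    show ?thesis by (simp only: h1 h2) (simp add: field_simps)
  qed
  then show ?thesis unfolding Phi_def exp_add[symmetric] by simp
qed

lemma sets_null_law: "sets (null_law n d \<tau> \<theta>) = sets (PiM (Zidx n d) (\<lambda>_. lborel))"
  unfolding null_law_def by (rule sets_Z_law)

lemma prob_space_null_law: "prob_space (null_law n d \<tau> \<theta>)"
  unfolding null_law_def by (rule prob_space_Z_law)

lemma Phi_measurable_null[measurable]:
  assumes "1 \<le> \<tau>" "\<tau> < n"
  shows "(\<lambda>z. Phi n d \<tau> a z) \<in> borel_measurable (null_law n d \<tau> \<theta>)"
  using Phi_measurable[OF assms] by (simp add: measurable_cong_sets[OF sets_null_law refl])

lemma int_Phi:
  assumes tau: "1 \<le> \<tau>" "\<tau> < n"
  shows "(\<integral>\<^sup>+ z. ennreal (Phi n d \<tau> a z) \<partial>null_law n d \<tau> \<theta>) = 1"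
proof -
  interpret Z: prob_space "Z_law n d \<tau> \<theta> a" by (rule prob_space_Z_law)
  have "1 = emeasure (Z_law n d \<tau> \<theta> a) (space (Z_law n d \<tau> \<theta> a))" by (simp add: Z.emeasure_space_1)
  also have "\<dots> = emeasure (density (null_law n d \<tau> \<theta>) (\<lambda>z. ennreal (Phi n d \<tau> a z))) (space (null_law n d \<tau> \<theta>))"
    using Z_law_density[OF tau, of d \<theta> a] by simp
  also have "\<dots> = (\<integral>\<^sup>+ z. ennreal (Phi n d \<tau> a z) * indicator (space (null_law n d \<tau> \<theta>)) z \<partial>null_law n d \<tau> \<theta>)"
    using Phi_measurable_null[OF tau] by (intro emeasure_density) auto
  also have "\<dots> = (\<integral>\<^sup>+ z. ennreal (Phi n d \<tau> a z) \<partial>null_law n d \<tau> \<theta>)"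
    by (intro nn_integral_cong) simp
  finally show ?thesis ..
qed


definition Sset :: "nat \<Rightarrow> nat \<Rightarrow> nat set set" where
  "Sset d p = {m. m \<subseteq> {1..d} \<and> card m = p}"

lemma Sset_finite: "finite (Sset d p)"
  unfolding Sset_def by (rule finite_subset[of _ "Pow {1..d}"]) auto

lemma Sset_nonempty: "p \<le> d \<Longrightarrow> Sset d p \<noteq> {}"
proof -
  assume "p \<le> d"
  then have "{1..p} \<in> Sset d p" by (auto simp: Sset_def)
  then show ?thesis by blast
qed

lemma bern_density:
  assumes tau: "1 \<le> \<tau>" "\<tau> < n" and pd: "p \<le> d"
  shows "bern_prior_law n d \<tau> \<theta> p r = density (null_law n d \<tau> \<theta>)
     (\<lambda>z. ennreal ((\<Sum>m\<in>Sset d p. Phi n d \<tau> (bern_shift p r m) z) / real (card (Sset d p))))"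
proof -
  let ?S = "Sset d p"
  let ?P0 = "null_law n d \<tau> \<theta>"
  let ?ZS = "PiM (Zidx n d) (\<lambda>_. lborel)"
  let ?K = "\<lambda>m. Z_law n d \<tau> \<theta> (bern_shift p r m)"
  have S: "finite ?S" "?S \<noteq> {}" using Sset_finite Sset_nonempty[OF pd] by auto
  have cS: "real (card ?S) > 0" using S by (simp add: card_gt_0_iff)
  have bp: "bern_prior_law n d \<tau> \<theta> p r = measure_pmf (pmf_of_set ?S) \<bind> ?K"
    unfolding bern_prior_law_def Sset_def ..
  have Kmeas: "?K \<in> measurable (measure_pmf (pmf_of_set ?S)) (subprob_algebra ?ZS)"
    by (auto simp: space_subprob_algebra sets_Z_law intro!: prob_space_imp_subprob_space prob_space_Z_law)
  have sb: "sets (measure_pmf (pmf_of_set ?S) \<bind> ?K) = sets ?ZS"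
    by (rule sets_bind_measurable[OF Kmeas]) simp
  have Pm: "\<And>m. (\<lambda>z. ennreal (Phi n d \<tau> (bern_shift p r m) z)) \<in> borel_measurable ?P0"
    using Phi_measurable_null[OF tau] by measurable
  show ?thesis
    unfolding bp
  proof (rule measure_eqI)
    show "sets (measure_pmf (pmf_of_set ?S) \<bind> ?K) = sets (density ?P0
     (\<lambda>z. ennreal ((\<Sum>m\<in>?S. Phi n d \<tau> (bern_shift p r m) z) / real (card ?S))))"
      by (simp add: sb sets_null_law)
    fix A assume A: "A \<in> sets (measure_pmf (pmf_of_set ?S) \<bind> ?K)"
    then have A': "A \<in> sets ?P0" by (simp add: sb sets_null_law)
    have "emeasure (measure_pmf (pmf_of_set ?S) \<bind> ?K) A = (\<integral>\<^sup>+ m. emeasure (?K m) A \<partial>measure_pmf (pmf_of_set ?S))"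
      proof (rule emeasure_bind[OF _ Kmeas])
      show "space (measure_pmf (pmf_of_set ?S)) \<noteq> {}" by simp
      show "A \<in> sets ?ZS" using A by (simp add: sb)
    qed
    also have "\<dots> = (\<Sum>m\<in>?S. emeasure (?K m) A) / of_nat (card ?S)"
      using S by (simp add: nn_integral_pmf_of_set)
    also have "\<dots> = (\<Sum>m\<in>?S. \<integral>\<^sup>+ z. ennreal (Phi n d \<tau> (bern_shift p r m) z) * indicator A z \<partial>?P0) / of_nat (card ?S)"
      using A' Pm by (simp add: Z_law_density[OF tau] emeasure_density)
    also have "\<dots> = (\<integral>\<^sup>+ z. (\<Sum>m\<in>?S. ennreal (Phi n d \<tau> (bern_shift p r m) z) * indicator A z) \<partial>?P0) / of_nat (card ?S)"
      using A' Pm by (subst nn_integral_sum) auto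
    also have "\<dots> = (\<integral>\<^sup>+ z. (\<Sum>m\<in>?S. ennreal (Phi n d \<tau> (bern_shift p r m) z) * indicator A z) / of_nat (card ?S) \<partial>?P0)"
      using A' Pm by (subst nn_integral_divide) auto
    also have "\<dots> = (\<integral>\<^sup>+ z. ennreal ((\<Sum>m\<in>?S. Phi n d \<tau> (bern_shift p r m) z) / real (card ?S)) * indicator A z \<partial>?P0)"
    proof (rule nn_integral_cong)
      fix z
      have "(\<Sum>m\<in>?S. ennreal (Phi n d \<tau> (bern_shift p r m) z) * indicator A z) / of_nat (card ?S)
          = (\<Sum>m\<in>?S. ennreal (Phi n d \<tau> (bern_shift p r m) z)) / ennreal (real (card ?S)) * indicator A z"
        by (simp only: sum_distrib_right[symmetric] ennreal_divide_times ennreal_times_divide ennreal_of_nat_eq_real_of_nat)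
      also have "\<dots> = ennreal ((\<Sum>m\<in>?S. Phi n d \<tau> (bern_shift p r m) z) / real (card ?S)) * indicator A z"
        using cS by (simp add: Phi_nonneg sum_nonneg divide_ennreal)
      finally show "(\<Sum>m\<in>?S. ennreal (Phi n d \<tau> (bern_shift p r m) z) * indicator A z) / of_nat (card ?S)
          = ennreal ((\<Sum>m\<in>?S. Phi n d \<tau> (bern_shift p r m) z) / real (card ?S)) * indicator A z" .
    qed
    also have "\<dots> = emeasure (density ?P0 (\<lambda>z. ennreal ((\<Sum>m\<in>?S. Phi n d \<tau> (bern_shift p r m) z) / real (card ?S)))) A"
      using A' Phi_measurable_null[OF tau] by (subst emeasure_density) auto
    finally show "emeasure (measure_pmf (pmf_of_set ?S) \<bind> ?K) A = emeasure (density ?P0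
       (\<lambda>z. ennreal ((\<Sum>m\<in>?S. Phi n d \<tau> (bern_shift p r m) z) / real (card ?S)))) A" .
  qed
qed


lemma second_moment_formula:
  assumes tau: "1 \<le> \<tau>" "\<tau> < n" and pd: "p \<le> d"
  shows "second_moment n d \<tau> \<theta> p r = ennreal ((\<Sum>m\<in>Sset d p. \<Sum>m'\<in>Sset d p.
      exp (qq n \<tau> * (\<Sum>j\<in>{1..d}. bern_shift p r m j * bern_shift p r m' j))) / (real (card (Sset d p)))\<^sup>2)"
proof -
  let ?S = "Sset d p"
  let ?P0 = "null_law n d \<tau> \<theta>"
  let ?N = "real (card ?S)"
  let ?ph = "\<lambda>m z. Phi n d \<tau> (bern_shift p r m) z"
  let ?c = "\<lambda>m m'. exp (qq n \<tau> * (\<Sum>j\<in>{1..d}. bern_shift p r m j * bern_shift p r m' j))"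
  define G where "G z = (\<Sum>m\<in>?S. ?ph m z) / ?N" for z
  interpret P0: prob_space ?P0 by (rule prob_space_null_law)
  have S: "finite ?S" "?S \<noteq> {}" using Sset_finite Sset_nonempty[OF pd] by auto
  have cS: "?N > 0" using S by (simp add: card_gt_0_iff)
  have Gnn: "0 \<le> G z" for z using cS by (simp add: G_def Phi_nonneg sum_nonneg)
  have Gm: "(\<lambda>z. ennreal (G z)) \<in> borel_measurable ?P0"
    unfolding G_def using Phi_measurable_null[OF tau] by measurable
  have dens: "density ?P0 (\<lambda>z. ennreal (G z)) = bern_prior_law n d \<tau> \<theta> p r"
    unfolding G_def by (rule bern_density[OF tau pd, symmetric])
  have AE: "AE z in ?P0. ennreal (G z) = LR n d \<tau> \<theta> p r z"
    unfolding LR_def by (rule P0.RN_deriv_unique[OF Gm dens])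
  have "second_moment n d \<tau> \<theta> p r = (\<integral>\<^sup>+ z. (ennreal (G z))\<^sup>2 \<partial>?P0)"
    unfolding second_moment_def using AE by (intro nn_integral_cong_AE) auto
  also have "\<dots> = (\<integral>\<^sup>+ z. (\<Sum>m\<in>?S. \<Sum>m'\<in>?S. ennreal (?c m m' / ?N\<^sup>2) * ennreal (Phi n d \<tau> (\<lambda>j. bern_shift p r m j + bern_shift p r m' j) z)) \<partial>?P0)"
  proof (rule nn_integral_cong)
    fix z
    have "(G z)\<^sup>2 = (\<Sum>m\<in>?S. \<Sum>m'\<in>?S. ?ph m z * ?ph m' z) / ?N\<^sup>2"
      unfolding G_def power2_eq_square by (simp add: sum_product)
    also have "\<dots> = (\<Sum>m\<in>?S. \<Sum>m'\<in>?S. ?c m m' / ?N\<^sup>2 * Phi n d \<tau> (\<lambda>j. bern_shift p r m j + bern_shift p r m' j) z)"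
      by (simp add: Phi_mult sum_divide_distrib mult.commute)
    finally have e: "(G z)\<^sup>2 = \<dots>" .
    show "(ennreal (G z))\<^sup>2 = (\<Sum>m\<in>?S. \<Sum>m'\<in>?S. ennreal (?c m m' / ?N\<^sup>2) * ennreal (Phi n d \<tau> (\<lambda>j. bern_shift p r m j + bern_shift p r m' j) z))"
    proof -
      have "(\<Sum>m\<in>?S. \<Sum>m'\<in>?S. ennreal (?c m m' / ?N\<^sup>2) * ennreal (Phi n d \<tau> (\<lambda>j. bern_shift p r m j + bern_shift p r m' j) z))
        = (\<Sum>m\<in>?S. \<Sum>m'\<in>?S. ennreal (?c m m' / ?N\<^sup>2 * Phi n d \<tau> (\<lambda>j. bern_shift p r m j + bern_shift p r m' j) z))"
        by (intro sum.cong refl ennreal_mult[symmetric]) (simp_all add: Phi_nonneg)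
      also have "\<dots> = ennreal (\<Sum>m\<in>?S. \<Sum>m'\<in>?S. ?c m m' / ?N\<^sup>2 * Phi n d \<tau> (\<lambda>j. bern_shift p r m j + bern_shift p r m' j) z)"
        by (subst sum_ennreal, simp add: Phi_nonneg, subst sum_ennreal, simp_all add: Phi_nonneg sum_nonneg)
      finally show ?thesis unfolding ennreal_power[OF Gnn] e ..
    qed
  qed
  also have "\<dots> = (\<Sum>m\<in>?S. \<Sum>m'\<in>?S. ennreal (?c m m' / ?N\<^sup>2) * (\<integral>\<^sup>+ z. ennreal (Phi n d \<tau> (\<lambda>j. bern_shift p r m j + bern_shift p r m' j) z) \<partial>?P0))"
    using Phi_measurable_null[OF tau]
    by (simp add: nn_integral_sum nn_integral_cmult)
  also have "\<dots> = (\<Sum>m\<in>?S. \<Sum>m'\<in>?S. ennreal (?c m m' / ?N\<^sup>2))"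
    by (simp add: int_Phi[OF tau])
  also have "\<dots> = ennreal ((\<Sum>m\<in>?S. \<Sum>m'\<in>?S. ?c m m') / ?N\<^sup>2)"
    by (simp add: sum_nonneg sum_divide_distrib)
  finally show ?thesis .
qed


lemma binom_ratio_bound:
  assumes "k \<le> p" "p \<le> d"
  shows "real ((d - k) choose (p - k)) * real d ^ k \<le> real (d choose p) * real p ^ k"
  using assms
proof (induction k)
  case 0 then show ?case by simp
next
  case (Suc k)
  have kp: "k < p" "k \<le> p" using Suc.prems by auto
  have IH: "real ((d - k) choose (p - k)) * real d ^ k \<le> real (d choose p) * real p ^ k"
    using Suc.IH kp Suc.prems by simp
  have dk: "real (d - k) > 0" using kp Suc.prems by simp
  have rec: "real (p - k) * real ((d - k) choose (p - k)) = real (d - k) * real ((d - Suc k) choose (p - Suc k))"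
  proof -
    have h0: "(p - k) * ((d - k) choose (p - k)) = (d - k) * ((d - k - 1) choose (p - k - 1))"
      using kp by (intro times_binomial_minus1_eq) simp
    have e1: "d - k - 1 = d - Suc k" and e2: "p - k - 1 = p - Suc k" by simp_all
    have h: "(p - k) * ((d - k) choose (p - k)) = (d - k) * ((d - Suc k) choose (p - Suc k))"
      using h0 unfolding e1 e2 .
    show ?thesis using arg_cong[OF h, of real] by simp
  qed
  have key: "real d * real (p - k) \<le> real p * real (d - k)"
    using kp Suc.prems mult_left_mono[of "real p" "real d" "real k"] by (simp add: of_nat_diff algebra_simps)
  have "real ((d - Suc k) choose (p - Suc k)) * real d ^ Suc k
      = real ((d - k) choose (p - k)) * real d ^ k * (real d * real (p - k) / real (d - k))"
  proof -
    define A where "A = real ((d - Suc k) choose (p - Suc k))"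
    define B where "B = real ((d - k) choose (p - k))"
    define e where "e = real (d - k)"
    define f where "f = real (p - k)"
    have "f * B = e * A" "e > 0" using rec dk unfolding A_def B_def e_def f_def by simp_all
    then have "A * real d ^ Suc k = B * real d ^ k * (real d * f / e)"
      by (simp add: field_simps)
    then show ?thesis unfolding A_def B_def e_def f_def .
  qed
  also have "\<dots> \<le> real (d choose p) * real p ^ k * (real d * real (p - k) / real (d - k))"
    by (intro mult_right_mono IH) simp
  also have "\<dots> \<le> real (d choose p) * real p ^ k * real p"
    using key dk by (intro mult_left_mono) (simp_all add: divide_le_eq)
  also have "\<dots> = real (d choose p) * real p ^ Suc k" by simp
  finally show ?case .
qed

lemma card_Sset: "card (Sset d p) = d choose p"
  unfolding Sset_def using n_subsets[of "{1..d}" p] by simp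

lemma card_superset_bound:
  assumes T: "T \<subseteq> {1..d}" "card T \<le> p" "p \<le> d"
  shows "real (card {m\<in>Sset d p. T \<subseteq> m}) * real d ^ card T \<le> real (card (Sset d p)) * real p ^ card T"
proof -
  have fT: "finite T" using T finite_subset by blast
  have inj: "inj_on (\<lambda>m. m - T) {m\<in>Sset d p. T \<subseteq> m}"
  proof (rule inj_onI)
    fix m m' assume "m \<in> {m\<in>Sset d p. T \<subseteq> m}" "m' \<in> {m\<in>Sset d p. T \<subseteq> m}" "m - T = m' - T"
    then show "m = m'" by (metis (no_types, lifting) Diff_partition mem_Collect_eq)
  qed
  have img: "(\<lambda>m. m - T) ` {m\<in>Sset d p. T \<subseteq> m} \<subseteq> {B. B \<subseteq> {1..d} - T \<and> card B = p - card T}"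
  proof
    fix B assume "B \<in> (\<lambda>m. m - T) ` {m\<in>Sset d p. T \<subseteq> m}"
    then obtain m where m: "m \<in> Sset d p" "T \<subseteq> m" "B = m - T" by auto
    have fm: "finite m" using m by (auto simp: Sset_def intro: finite_subset)
    show "B \<in> {B. B \<subseteq> {1..d} - T \<and> card B = p - card T}"
      using m fm fT by (auto simp: Sset_def card_Diff_subset)
  qed
  have "card {m\<in>Sset d p. T \<subseteq> m} \<le> card {B. B \<subseteq> {1..d} - T \<and> card B = p - card T}"
    by (rule card_inj_on_le[OF inj img]) (rule finite_subset[of _ "Pow ({1..d} - T)"], auto)
  also have "\<dots> = (d - card T) choose (p - card T)"
    using n_subsets[of "{1..d} - T" "p - card T"] T fT by (simp add: card_Diff_subset)
  finally have c: "real (card {m\<in>Sset d p. T \<subseteq> m}) \<le> real ((d - card T) choose (p - card T))" by simp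
  have "real (card {m\<in>Sset d p. T \<subseteq> m}) * real d ^ card T \<le> real ((d - card T) choose (p - card T)) * real d ^ card T"
    by (intro mult_right_mono c) simp
  also have "\<dots> \<le> real (card (Sset d p)) * real p ^ card T"
    unfolding card_Sset using T by (intro binom_ratio_bound) auto
  finally show ?thesis .
qed


lemma pow_sum_subsets:
  fixes y :: real
  assumes "finite A"
  shows "(1 + y) ^ card A = (\<Sum>T\<in>Pow A. y ^ card T)"
  using prod_add[OF assms, of "\<lambda>_. y" "\<lambda>_. 1"] by (simp add: add.commute)

lemma row_bound:
  fixes y :: real
  assumes m': "m' \<in> Sset d p" and pd: "p \<le> d" and y: "0 \<le> y" and d: "0 < d"
  shows "(\<Sum>m\<in>Sset d p. (1 + y) ^ card (m \<inter> m')) \<le> real (card (Sset d p)) * (1 + y * real p / real d) ^ p"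
proof -
  let ?S = "Sset d p"
  let ?N = "real (card ?S)"
  have fm': "finite m'" and m'd: "m' \<subseteq> {1..d}" and cm': "card m' = p"
    using m' by (auto simp: Sset_def intro: finite_subset)
  have fS: "finite ?S" by (rule Sset_finite)
  have "(\<Sum>m\<in>?S. (1 + y) ^ card (m \<inter> m')) = (\<Sum>m\<in>?S. \<Sum>T\<in>Pow (m \<inter> m'). y ^ card T)"
    using fm' by (intro sum.cong refl pow_sum_subsets) simp
  also have "\<dots> = (\<Sum>m\<in>?S. \<Sum>T\<in>Pow m'. if T \<subseteq> m then y ^ card T else 0)"
  proof (rule sum.cong[OF refl])
    fix m assume "m \<in> ?S"
    have eq: "Pow (m \<inter> m') = {T \<in> Pow m'. T \<subseteq> m}" by auto
    show "(\<Sum>T\<in>Pow (m \<inter> m'). y ^ card T) = (\<Sum>T\<in>Pow m'. if T \<subseteq> m then y ^ card T else 0)"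
      unfolding eq by (rule sum.inter_filter) (simp add: fm')
  qed
  also have "\<dots> = (\<Sum>T\<in>Pow m'. \<Sum>m\<in>?S. if T \<subseteq> m then y ^ card T else 0)"
    by (rule sum.swap)
  also have "\<dots> = (\<Sum>T\<in>Pow m'. y ^ card T * real (card {m\<in>?S. T \<subseteq> m}))"
  proof (rule sum.cong[OF refl])
    fix T assume "T \<in> Pow m'"
    have "(\<Sum>m\<in>?S. if T \<subseteq> m then y ^ card T else 0) = (\<Sum>m\<in>{m\<in>?S. T \<subseteq> m}. y ^ card T)"
      by (rule sum.inter_filter[symmetric]) (rule fS)
    then show "(\<Sum>m\<in>?S. if T \<subseteq> m then y ^ card T else 0) = y ^ card T * real (card {m\<in>?S. T \<subseteq> m})"
      by simp
  qed
  also have "\<dots> \<le> (\<Sum>T\<in>Pow m'. y ^ card T * (?N * (real p / real d) ^ card T))"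
  proof (intro sum_mono mult_left_mono)
    fix T assume T: "T \<in> Pow m'"
    then have fT: "finite T" using fm' finite_subset by auto
    have "card T \<le> card m'" using T fm' by (simp add: card_mono)
    then have b: "real (card {m\<in>?S. T \<subseteq> m}) * real d ^ card T \<le> ?N * real p ^ card T"
      using T m'd cm' pd by (intro card_superset_bound) auto
    have dp: "real d ^ card T > 0" using d by simp
    show "real (card {m\<in>?S. T \<subseteq> m}) \<le> ?N * (real p / real d) ^ card T"
      using b dp by (simp add: power_divide field_simps)
    show "0 \<le> y ^ card T" using y by simp
  qed
  also have "\<dots> = ?N * (\<Sum>T\<in>Pow m'. (y * real p / real d) ^ card T)"
    unfolding sum_distrib_left by (rule sum.cong[OF refl]) (simp add: power_mult_distrib power_divide)
  also have "\<dots> = ?N * (1 + y * real p / real d) ^ p"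
    using pow_sum_subsets[OF fm', of "y * real p / real d"] cm' by simp
  finally show ?thesis .
qed

lemma avg_bounds:
  assumes pd: "p \<le> d" and d: "0 < d" and A: "0 \<le> A"
  shows "1 \<le> (\<Sum>m\<in>Sset d p. \<Sum>m'\<in>Sset d p. exp (A * real (card (m \<inter> m')))) / (real (card (Sset d p)))\<^sup>2"
    and "(\<Sum>m\<in>Sset d p. \<Sum>m'\<in>Sset d p. exp (A * real (card (m \<inter> m')))) / (real (card (Sset d p)))\<^sup>2
          \<le> exp ((exp A - 1) * (real p)\<^sup>2 / real d)"
proof -
  let ?S = "Sset d p"
  let ?N = "real (card ?S)"
  have S: "finite ?S" "?S \<noteq> {}" using Sset_finite Sset_nonempty[OF pd] by auto
  have cS: "?N > 0" using S by (simp add: card_gt_0_iff)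
  have "?N\<^sup>2 = (\<Sum>m\<in>?S. \<Sum>m'\<in>?S. 1)" by (simp add: power2_eq_square)
  also have "\<dots> \<le> (\<Sum>m\<in>?S. \<Sum>m'\<in>?S. exp (A * real (card (m \<inter> m'))))"
    using A by (intro sum_mono) simp
  finally show "1 \<le> (\<Sum>m\<in>?S. \<Sum>m'\<in>?S. exp (A * real (card (m \<inter> m')))) / ?N\<^sup>2"
    using cS by simp
  let ?y = "exp A - 1"
  have y: "0 \<le> ?y" using A by simp
  have "(\<Sum>m\<in>?S. \<Sum>m'\<in>?S. exp (A * real (card (m \<inter> m')))) = (\<Sum>m'\<in>?S. \<Sum>m\<in>?S. (1 + ?y) ^ card (m \<inter> m'))"
    by (subst sum.swap) (simp add: exp_of_nat_mult[symmetric] mult.commute)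
  also have "\<dots> \<le> (\<Sum>m'\<in>?S. ?N * (1 + ?y * real p / real d) ^ p)"
    by (intro sum_mono row_bound pd y d)
  also have "\<dots> = ?N\<^sup>2 * (1 + ?y * real p / real d) ^ p"
    by (simp add: power2_eq_square)
  also have "\<dots> \<le> ?N\<^sup>2 * exp (?y * real p / real d) ^ p"
    using y d by (intro mult_left_mono power_mono) (simp_all add: exp_ge_add_one_self)
  also have "exp (?y * real p / real d) ^ p = exp (?y * (real p)\<^sup>2 / real d)"
    by (simp add: exp_of_nat_mult[symmetric] power2_eq_square field_simps)
  finally show "(\<Sum>m\<in>?S. \<Sum>m'\<in>?S. exp (A * real (card (m \<inter> m')))) / ?N\<^sup>2 \<le> exp (?y * (real p)\<^sup>2 / real d)"
    using cS by (simp add: divide_le_eq mult.commute)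
qed


lemma powr_bound:
  fixes dd pp C k \<beta> A :: real
  assumes pp: "0 < pp" "pp < dd" and pC: "pp \<le> C * dd powr (1 - \<beta>)"
    and k: "0 \<le> k" "k < 2" and A: "A \<le> k * ln (dd / pp)"
  shows "(exp A - 1) * pp\<^sup>2 / dd \<le> C powr (2 - k) * dd powr (- (2 * \<beta> - 1 - \<beta> * k))"
proof -
  have dd: "0 < dd" using pp by simp
  have C: "0 < C * dd powr (1 - \<beta>)" using pp pC by linarith
  have "exp A \<le> exp (k * ln (dd / pp))" using A by simp
  also have "\<dots> = (dd / pp) powr k" using pp dd by (simp add: powr_def)
  finally have eA: "exp A \<le> (dd / pp) powr k" .
  have "(exp A - 1) * pp\<^sup>2 / dd \<le> (dd / pp) powr k * pp\<^sup>2 / dd"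
    using eA dd by (intro divide_right_mono mult_right_mono) simp_all
  also have "\<dots> = dd powr (k - 1) * pp powr (2 - k)"
  proof -
    have "pp\<^sup>2 = pp powr 2" using pp by (simp add: powr_numeral)
    moreover have "dd = dd powr 1" using dd by simp
    ultimately have "(dd / pp) powr k * pp\<^sup>2 / dd = dd powr k / pp powr k * pp powr 2 / dd powr 1"
      by (simp add: powr_divide pp dd less_imp_le)
    also have "\<dots> = dd powr (k - 1) * pp powr (2 - k)"
      by (simp add: powr_diff)
    finally show ?thesis .
  qed
  also have "\<dots> \<le> dd powr (k - 1) * (C * dd powr (1 - \<beta>)) powr (2 - k)"
    using pp pC k by (intro mult_left_mono powr_mono2) simp_all
  also have "\<dots> = C powr (2 - k) * dd powr (- (2 * \<beta> - 1 - \<beta> * k))"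
  proof -
    have C0: "0 \<le> C" using C dd by (simp add: zero_less_mult_iff)
    have "(C * dd powr (1 - \<beta>)) powr (2 - k) = C powr (2 - k) * dd powr ((1 - \<beta>) * (2 - k))"
      using C0 dd by (simp add: powr_mult powr_powr)
    moreover have "dd powr (k - 1) * dd powr ((1 - \<beta>) * (2 - k)) = dd powr (- (2 * \<beta> - 1 - \<beta> * k))"
      by (simp add: powr_add[symmetric] algebra_simps)
    ultimately show ?thesis by (simp add: algebra_simps)
  qed
  finally show ?thesis .
qed

lemma inner_shift:
  assumes m: "m \<subseteq> {1..d}" and m': "m' \<subseteq> {1..d}" and p: "0 < p"
  shows "(\<Sum>j\<in>{1..d}. bern_shift p r m j * bern_shift p r m' j) = real (card (m \<inter> m')) * ((r)\<^sup>2 / real p)"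
proof -
  have "(\<Sum>j\<in>{1..d}. bern_shift p r m j * bern_shift p r m' j) = (\<Sum>j\<in>{1..d}. if j \<in> m \<inter> m' then (r)\<^sup>2 / real p else 0)"
    using p by (intro sum.cong refl) (simp add: bern_shift_def power2_eq_square real_sqrt_mult[symmetric])
  also have "\<dots> = (\<Sum>j\<in>{1..d} \<inter> (m \<inter> m'). (r)\<^sup>2 / real p)"
    using sum.inter_restrict[of "{1..d}" "\<lambda>_. (r)\<^sup>2 / real p" "m \<inter> m'"] by simp
  also have "{1..d} \<inter> (m \<inter> m') = m \<inter> m'" using m by auto
  finally show ?thesis by simp
qed

lemma qq_hfun: "0 < n \<Longrightarrow> \<tau> \<le> n \<Longrightarrow> qq n \<tau> = real n * hfun n \<tau>"
  by (simp add: qq_def hfun_def of_nat_diff field_simps)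

lemma second_moment_avg:
  assumes tau: "1 \<le> \<tau>" "\<tau> < n" and pd: "p \<le> d" and p: "0 < p"
  shows "second_moment n d \<tau> \<theta> p r = ennreal ((\<Sum>m\<in>Sset d p. \<Sum>m'\<in>Sset d p.
      exp (((r)\<^sup>2 * real n * hfun n \<tau> / real p) * real (card (m \<inter> m')))) / (real (card (Sset d p)))\<^sup>2)"
proof -
  have "(\<Sum>m\<in>Sset d p. \<Sum>m'\<in>Sset d p. exp (qq n \<tau> * (\<Sum>j\<in>{1..d}. bern_shift p r m j * bern_shift p r m' j)))
      = (\<Sum>m\<in>Sset d p. \<Sum>m'\<in>Sset d p. exp (((r)\<^sup>2 * real n * hfun n \<tau> / real p) * real (card (m \<inter> m'))))"
  proof (intro sum.cong refl)
    fix m m' assume "m \<in> Sset d p" "m' \<in> Sset d p"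
    then have "m \<subseteq> {1..d}" "m' \<subseteq> {1..d}" by (auto simp: Sset_def)
    then have i: "(\<Sum>j\<in>{1..d}. bern_shift p r m j * bern_shift p r m' j) = real (card (m \<inter> m')) * ((r)\<^sup>2 / real p)"
      using p by (rule inner_shift)
    show "exp (qq n \<tau> * (\<Sum>j\<in>{1..d}. bern_shift p r m j * bern_shift p r m' j)) =
      exp (((r)\<^sup>2 * real n * hfun n \<tau> / real p) * real (card (m \<inter> m')))"
      unfolding i using tau p by (simp add: qq_hfun)
  qed
  then show ?thesis using second_moment_formula[OF tau pd] by simp
qed


theorem mainTheorem11:
  fixes \<beta> :: real and n p \<tau> :: "nat \<Rightarrow> nat" and r :: "nat \<Rightarrow> real"
    and \<theta> :: "nat \<Rightarrow> nat \<Rightarrow> real"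
  assumes "1/2 < \<beta>" and "\<beta> < 1"
    and "\<forall>d. 2 \<le> n d"
    and "\<forall>d. 1 \<le> \<tau> d \<and> \<tau> d \<le> n d - 1"
    and "\<exists>c C. 0 < c \<and> 0 < C \<and> (\<forall>\<^sub>F d in sequentially.
            c * real d powr (1 - \<beta>) \<le> real (p d) \<and> real (p d) \<le> C * real d powr (1 - \<beta>))"
    and "limsup (\<lambda>d. ereal ((r d)\<^sup>2 * real (n d) * hfun (n d) (\<tau> d)
            / (real (p d) * ln (real d / real (p d))))) < ereal (2 - 1 / \<beta>)"
  shows "((\<lambda>d. second_moment (n d) d (\<tau> d) (\<theta> d) (p d) (r d)) \<longlongrightarrow> 1) sequentially"
proof -
  from assms(5) obtain c C where c: "0 < c" "0 < C" and evp: "\<forall>\<^sub>F d in sequentially.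
            c * real d powr (1 - \<beta>) \<le> real (p d) \<and> real (p d) \<le> C * real d powr (1 - \<beta>)"
    by blast
  have b0: "0 < \<beta>" using assms(1) by simp
  from ereal_dense2[OF assms(6)] obtain \<kappa> where \<kappa>1: "limsup (\<lambda>d. ereal ((r d)\<^sup>2 * real (n d) * hfun (n d) (\<tau> d)
            / (real (p d) * ln (real d / real (p d))))) < ereal \<kappa>" and \<kappa>2: "ereal \<kappa> < ereal (2 - 1 / \<beta>)"
    by blast
  define k where "k = max \<kappa> 0"
  have b2: "0 < 2 - 1 / \<beta>" using assms(1) b0 by (simp add: field_simps)
  have k: "0 \<le> k" "k < 2 - 1 / \<beta>" "\<kappa> \<le> k" using \<kappa>2 b2 by (auto simp: k_def)
  define \<epsilon> where "\<epsilon> = 2 * \<beta> - 1 - \<beta> * k"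
  have \<epsilon>: "0 < \<epsilon>"
  proof -
    have "\<beta> * k < \<beta> * (2 - 1 / \<beta>)" using k b0 by (intro mult_strict_left_mono) simp_all
    also have "\<dots> = 2 * \<beta> - 1" using b0 by (simp add: field_simps)
    finally show ?thesis unfolding \<epsilon>_def by simp
  qed
  have k2: "k < 2" using k b0 by (smt (verit) divide_pos_pos)
  have evR: "\<forall>\<^sub>F d in sequentially. (r d)\<^sup>2 * real (n d) * hfun (n d) (\<tau> d)
            / (real (p d) * ln (real d / real (p d))) < \<kappa>"
    using Limsup_lessD[OF \<kappa>1] by simp
  obtain N :: nat where N: "C powr (1 / \<beta>) < real N" using reals_Archimedean2 by blast
  have evd: "\<forall>\<^sub>F d in sequentially. C < real d powr \<beta> \<and> 0 < real d"
    using eventually_ge_at_top[of "Suc N"]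
  proof eventually_elim
    case (elim d)
    then have d: "C powr (1 / \<beta>) < real d" using N by linarith
    have "C = (C powr (1 / \<beta>)) powr \<beta>" using c b0 by (simp add: powr_powr)
    also have "\<dots> < real d powr \<beta>" using d b0 by (intro powr_less_mono2) simp_all
    finally show ?case using elim by simp
  qed
  define avg where "avg d = (\<Sum>m\<in>Sset d (p d). \<Sum>m'\<in>Sset d (p d).
      exp (((r d)\<^sup>2 * real (n d) * hfun (n d) (\<tau> d) / real (p d)) * real (card (m \<inter> m')))) / (real (card (Sset d (p d))))\<^sup>2" for d
  have ev: "\<forall>\<^sub>F d in sequentially. second_moment (n d) d (\<tau> d) (\<theta> d) (p d) (r d) = ennreal (avg d)
      \<and> 1 \<le> avg d \<and> avg d \<le> exp (C powr (2 - k) * real d powr (- \<epsilon>))"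
    using evp evR evd
  proof eventually_elim
    case (elim d)
    have d0: "0 < real d" using elim by simp
    have cd: "0 < c * real d powr (1 - \<beta>)" using c d0 by simp
    have p0: "0 < real (p d)" using cd elim by linarith
    have "C * real d powr (1 - \<beta>) < real d powr \<beta> * real d powr (1 - \<beta>)"
      using elim d0 by (intro mult_strict_right_mono) simp_all
    also have "\<dots> = real d" using d0 by (simp add: powr_add[symmetric])
    finally have pd: "real (p d) < real d" using elim by linarith
    have tau: "1 \<le> \<tau> d" "\<tau> d < n d" using assms(3,4) by (metis Suc_le_eq diff_less le_trans less_le_trans zero_less_numeral One_nat_def numeral_2_eq_2 lessI le_imp_less_Suc)+
    define A where "A = (r d)\<^sup>2 * real (n d) * hfun (n d) (\<tau> d) / real (p d)"
    have hf: "0 \<le> hfun (n d) (\<tau> d)" using tau by (simp add: hfun_def divide_le_eq_1)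
    have A0: "0 \<le> A" unfolding A_def using hf by simp
    have ln0: "0 < ln (real d / real (p d))" using pd p0 by simp
    have "A = ((r d)\<^sup>2 * real (n d) * hfun (n d) (\<tau> d) / (real (p d) * ln (real d / real (p d)))) * ln (real d / real (p d))"
      unfolding A_def using ln0 by (simp add: field_simps)
    also have "\<dots> \<le> k * ln (real d / real (p d))"
      using elim k ln0 by (intro mult_right_mono) simp_all
    finally have Ak: "A \<le> k * ln (real d / real (p d))" .
    have pdn: "p d \<le> d" "0 < p d" "0 < d" using pd p0 d0 by simp_all
    have sm: "second_moment (n d) d (\<tau> d) (\<theta> d) (p d) (r d) = ennreal (avg d)"
      unfolding avg_def using second_moment_avg[OF tau pdn(1,2)] .
    have lo: "1 \<le> avg d" unfolding avg_def using avg_bounds(1)[OF pdn(1,3) A0] unfolding A_def .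
    have "avg d \<le> exp ((exp A - 1) * (real (p d))\<^sup>2 / real d)"
      unfolding avg_def using avg_bounds(2)[OF pdn(1,3) A0] unfolding A_def .
    also have "\<dots> \<le> exp (C powr (2 - k) * real d powr (- \<epsilon>))"
      unfolding \<epsilon>_def using powr_bound[OF p0 pd _ k(1) k2 Ak] elim by simp
    finally show ?case using sm lo by simp
  qed
  have lim0: "((\<lambda>d. exp (C powr (2 - k) * real d powr (- \<epsilon>))) \<longlongrightarrow> 1) sequentially"
  proof -
    have "((\<lambda>d. real d powr (- \<epsilon>)) \<longlongrightarrow> 0) sequentially"
      using \<epsilon> by (intro tendsto_neg_powr filterlim_real_sequentially) simp
    then have "((\<lambda>d. C powr (2 - k) * real d powr (- \<epsilon>)) \<longlongrightarrow> C powr (2 - k) * 0) sequentially"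
      by (intro tendsto_mult tendsto_const)
    then have "((\<lambda>d. exp (C powr (2 - k) * real d powr (- \<epsilon>))) \<longlongrightarrow> exp (C powr (2 - k) * 0)) sequentially"
      by (rule tendsto_exp)
    then show ?thesis by simp
  qed
  have "(avg \<longlongrightarrow> 1) sequentially"
  proof (rule tendsto_sandwich[OF _ _ tendsto_const lim0])
    show "\<forall>\<^sub>F d in sequentially. 1 \<le> avg d" using ev by eventually_elim simp
    show "\<forall>\<^sub>F d in sequentially. avg d \<le> exp (C powr (2 - k) * real d powr (- \<epsilon>))" using ev by eventually_elim simp
  qed
  then have "((\<lambda>d. ennreal (avg d)) \<longlongrightarrow> ennreal 1) sequentially"
    by (rule tendsto_ennrealI)
  then have "((\<lambda>d. ennreal (avg d)) \<longlongrightarrow> 1) sequentially" by simp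
  moreover have "\<forall>\<^sub>F d in sequentially. ennreal (avg d) = second_moment (n d) d (\<tau> d) (\<theta> d) (p d) (r d)"
    using ev by eventually_elim simp
  ultimately show ?thesis by (rule Lim_transform_eventually)
qed

end
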